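(* Let $m\in\{1,2,3\}$ and let $S\ni h$ be a polarized lattice that is $(m-1)$-admissible (no condition if $m=1$), with $h^2\ge4$ if $m=2$ and $h^2=8$ if $m=3$. Let $\Delta$ be a Weyl chamber for $\operatorname{rt}(S,h)$ and $\bar P$ the closed fundamental polyhedron extending $\Delta$. If $S\ni h$ fails to be $m$-admissible, then there exists an $m$-isotropic vector $w\in\bar P$.
   Context: All lattices are even; $(S,h)$ polarized means $S$ hyperbolic, $h^2>0$. $\operatorname{rt}(S,h)$ is the root lattice spanned by $\{r\in S: r^2=-2,\ r\cdot h=0\}$, and a Weyl chamber $\Delta$ for it is given by its set of positive roots $P_\Delta$. The closed fundamental polyhedron is $\bar P=\{v\in S\otimes\mathbb{R}: v^2\ge0,\ v\cdot h\ge0,\ v\cdot r\ge0 \text{ for all } r\in P_\Delta \text{ and all roots } r \text{ with } r\cdot h>0\}$. A vector $w$ is $m$-isotropic if $w^2=0$ and $w\cdot h=m$. $S\ni h$ is $1$-admissible if it has no $1$-isotropic vector; $2$-admissible (defined for $h^2\ge4$) if moreover it has no $2$-isotropic vector; $3$-admissible (defined for $h^2=8$) if moreover it has no $3$-isotropic vector. *)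

theory Defs
  imports "HOL-Analysis.Analysis"
begin

text \<open>An even lattice S of rank CARD('n) is modelled as the free module int^'n with an
integral symmetric Gram matrix G (the bilinear form on the standard basis).
S \<otimes> R is real^'n with the same form.\<close>

definition bf :: "int^'n^'n \<Rightarrow> int^'n \<Rightarrow> int^'n \<Rightarrow> int" where
  "bf G x y = (\<Sum>i\<in>UNIV. \<Sum>j\<in>UNIV. G$i$j * x$i * y$j)"

definition bfR :: "int^'n^'n \<Rightarrow> real^'n \<Rightarrow> real^'n \<Rightarrow> real" where
  "bfR G x y = (\<Sum>i\<in>UNIV. \<Sum>j\<in>UNIV. of_int (G$i$j) * x$i * y$j)"

definition realv :: "int^'n \<Rightarrow> real^'n" where
  "realv x = (\<chi> i. of_int (x$i))"

definition even_lattice :: "int^'n^'n \<Rightarrow> bool" where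
  "even_lattice G \<longleftrightarrow> (\<forall>i j. G$i$j = G$j$i) \<and> (\<forall>i. even (G$i$i))"

text \<open>Hyperbolic: signature (1, rank-1), i.e. there is a real vector of positive square
whose orthogonal complement is negative definite.\<close>
definition hyperbolic :: "int^'n^'n \<Rightarrow> bool" where
  "hyperbolic G \<longleftrightarrow> (\<exists>e. bfR G e e > 0 \<and>
      (\<forall>x. bfR G e x = 0 \<and> x \<noteq> 0 \<longrightarrow> bfR G x x < 0))"

definition polarized :: "int^'n^'n \<Rightarrow> int^'n \<Rightarrow> bool" where
  "polarized G h \<longleftrightarrow> even_lattice G \<and> hyperbolic G \<and> bf G h h > 0"

definition roots_h :: "int^'n^'n \<Rightarrow> int^'n \<Rightarrow> (int^'n) set" where
  "roots_h G h = {r. bf G r r = -2 \<and> bf G r h = 0}"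

text \<open>P is the set of positive roots of a Weyl chamber of rt(S,h): the roots on the
positive side of some real vector lying on no root hyperplane.\<close>
definition weyl_positive_roots :: "int^'n^'n \<Rightarrow> int^'n \<Rightarrow> (int^'n) set \<Rightarrow> bool" where
  "weyl_positive_roots G h P \<longleftrightarrow> (\<exists>\<xi>::real^'n.
      (\<forall>r\<in>roots_h G h. bfR G \<xi> (realv r) \<noteq> 0) \<and>
      P = {r\<in>roots_h G h. bfR G \<xi> (realv r) > 0})"

definition closed_fund_polyhedron :: "int^'n^'n \<Rightarrow> int^'n \<Rightarrow> (int^'n) set \<Rightarrow> (real^'n) set" where
  "closed_fund_polyhedron G h P = {v. bfR G v v \<ge> 0 \<and> bfR G v (realv h) \<ge> 0 \<and>
      (\<forall>r\<in>P. bfR G v (realv r) \<ge> 0) \<and>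
      (\<forall>r. bf G r r = -2 \<and> bf G r h > 0 \<longrightarrow> bfR G v (realv r) \<ge> 0)}"

definition isotropic :: "int^'n^'n \<Rightarrow> int^'n \<Rightarrow> int \<Rightarrow> int^'n \<Rightarrow> bool" where
  "isotropic G h m w \<longleftrightarrow> bf G w w = 0 \<and> bf G w h = m"

definition admissible :: "int^'n^'n \<Rightarrow> int^'n \<Rightarrow> nat \<Rightarrow> bool" where
  "admissible G h k \<longleftrightarrow> (\<forall>j\<in>{1..k}. \<not> (\<exists>w. isotropic G h (int j) w))"

end

theory Submission
  imports Defs
begin

lemma bfR_add1: "bfR G (x+y) z = bfR G x z + bfR G y z"
  by (simp add: bfR_def algebra_simps sum.distrib)
lemma bfR_add2: "bfR G x (y+z) = bfR G x y + bfR G x z"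
  by (simp add: bfR_def algebra_simps sum.distrib)
lemma bfR_scale1: "bfR G (a *\<^sub>R x) y = a * bfR G x y"
  by (simp add: bfR_def algebra_simps sum_distrib_left)
lemma bfR_scale2: "bfR G x (a *\<^sub>R y) = a * bfR G x y"
  by (simp add: bfR_def algebra_simps sum_distrib_left)
lemma bfR_diff1: "bfR G (x-y) z = bfR G x z - bfR G y z"
  using bfR_add1[of G x "-y" z] bfR_scale1[of G "-1" y z] by simp
lemma bfR_diff2: "bfR G x (y-z) = bfR G x y - bfR G x z"
  using bfR_add2[of G x y "-z"] bfR_scale2[of G x "-1" z] by simp
lemma bfR_zero1[simp]: "bfR G 0 y = 0" by (simp add: bfR_def)
lemma bfR_zero2[simp]: "bfR G x 0 = 0" by (simp add: bfR_def)
lemma bfR_sym: assumes "even_lattice G" shows "bfR G x y = bfR G y x"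
proof -
  have s: "\<And>i j. G$i$j = G$j$i" using assms by (simp add: even_lattice_def)
  show ?thesis unfolding bfR_def
    by (subst sum.swap) (simp add: s algebra_simps)
qed
lemma bfR_realv: "bfR G (realv x) (realv y) = of_int (bf G x y)"
  by (simp add: bfR_def bf_def realv_def)
lemma realv_add: "realv (x + y) = realv x + realv y"
  by (simp add: realv_def vec_eq_iff)
lemma realv_smult: "realv (c *s x) = of_int c *\<^sub>R realv x"
  by (simp add: realv_def vec_eq_iff)
lemma realv_inj: "realv x = realv y \<Longrightarrow> x = y"
  by (simp add: realv_def vec_eq_iff)
lemma realv_zero[simp]: "realv 0 = 0"
  by (simp add: realv_def vec_eq_iff)

lemma cont_bfR: "continuous_on S (\<lambda>x. bfR G x (y x))" if "continuous_on S y" for y :: "real^'n \<Rightarrow> real^'n"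
  unfolding bfR_def using that by (intro continuous_intros) 

lemma hperp_neg:
  assumes sym: "even_lattice G" and hyp: "hyperbolic G" and hp: "bfR G h h > 0"
    and xh: "bfR G x h = 0" and x0: "x \<noteq> 0"
  shows "bfR G x x < 0"
proof (rule ccontr)
  assume nn: "\<not> bfR G x x < 0"
  obtain e where e1: "bfR G e e > 0" and e2: "\<And>x. bfR G e x = 0 \<Longrightarrow> x \<noteq> 0 \<Longrightarrow> bfR G x x < 0"
    using hyp unfolding hyperbolic_def by blast
  define a where "a = bfR G e x"
  define b where "b = bfR G e h"
  define y where "y = a *\<^sub>R h - b *\<^sub>R x"
  have hx: "bfR G h x = 0" using xh bfR_sym[OF sym] by metis
  have ey: "bfR G e y = 0" unfolding y_def a_def b_def by (simp add: bfR_diff2 bfR_scale2)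
  show False
  proof (cases "b = 0")
    case True
    have "h \<noteq> 0" using hp by auto
    then have "bfR G h h < 0" using e2[of h] True b_def by simp
    then show False using hp by simp
  next
    case False
    have "y \<noteq> 0"
    proof
      assume y0: "y = 0"
      have "bfR G y h = a * bfR G h h" unfolding y_def by (simp add: bfR_diff1 bfR_scale1 xh)
      then have "a = 0" using y0 hp by simp
      then have "b *\<^sub>R x = 0" using y0 y_def by simp
      then show False using False x0 by simp
    qed
    then have "bfR G y y < 0" using e2 ey by blast
    moreover have "bfR G y y = a*a * bfR G h h + b*b*bfR G x x"
      unfolding y_def by (simp add: bfR_diff1 bfR_diff2 bfR_scale1 bfR_scale2 xh hx)
    moreover have "a*a * bfR G h h \<ge> 0" using hp by simp
    moreover have "b*b * bfR G x x \<ge> 0" using nn by simp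
    ultimately show False by linarith
  qed
qed

lemma gpos:
  assumes sym: "even_lattice G" and hyp: "hyperbolic G" and hp: "bfR G h h > 0"
    and u0: "u \<noteq> 0"
  shows "2 * (bfR G u h)^2 - bfR G h h * bfR G u u > 0"
proof -
  define t where "t = bfR G u h / bfR G h h"
  define v where "v = u - t *\<^sub>R h"
  have hu: "bfR G h u = bfR G u h" using bfR_sym[OF sym] by metis
  have vh: "bfR G v h = 0" unfolding v_def t_def using hp by (simp add: bfR_diff1 bfR_scale1)
  have Qv: "bfR G v v = bfR G u u - 2 * t * bfR G u h + t*t*bfR G h h"
    unfolding v_def by (simp add: bfR_diff1 bfR_diff2 bfR_scale1 bfR_scale2 hu algebra_simps)
  have key: "2 * (bfR G u h)^2 - bfR G h h * bfR G u u = (bfR G u h)^2 - bfR G h h * bfR G v v"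
    using hp unfolding Qv t_def by (simp add: field_simps power2_eq_square)
  show ?thesis
  proof (cases "v = 0")
    case True
    then have "u = t *\<^sub>R h" using v_def by simp
    then have "t \<noteq> 0" using u0 by auto
    then have "bfR G u h \<noteq> 0" using t_def by auto
    then show ?thesis unfolding key using True by simp
  next
    case False
    then have "bfR G v v < 0" using hperp_neg[OF sym hyp hp vh] by simp
    then have "bfR G h h * bfR G v v < 0" using hp by (simp add: mult_pos_neg)
    then show ?thesis unfolding key by (smt (verit) zero_le_power2)
  qed
qed

lemma int_box_finite: "finite {w::int^'n. \<forall>i. \<bar>w$i\<bar> \<le> B}"
proof -
  have f: "finite (Pi\<^sub>E (UNIV::'n set) (\<lambda>_. {-B..B}))" by (intro finite_PiE) auto
  have "{w::int^'n. \<forall>i. \<bar>w$i\<bar> \<le> B} \<subseteq> vec_nth -` (Pi\<^sub>E UNIV (\<lambda>_. {-B..B}))"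
    by (auto simp: PiE_UNIV_domain abs_le_iff) (smt (verit))
  moreover have "inj vec_nth" by (simp add: inj_def vec_eq_iff)
  ultimately show ?thesis using finite_vimageI[OF f] finite_subset by blast
qed

lemma iso_finite:
  assumes sym: "even_lattice G" and hyp: "hyperbolic G" and hp: "bf G h h > 0"
  shows "finite {w::int^'n. bf G w w = 0 \<and> bf G w h = m}"
proof -
  define hr where "hr = realv h"
  have hp': "bfR G hr hr > 0" using hp by (simp add: hr_def bfR_realv)
  define g where "g = (\<lambda>u. 2 * (bfR G u hr)^2 - bfR G hr hr * bfR G u u)"
  have cg: "continuous_on (sphere 0 1) g" unfolding g_def
    by (intro continuous_intros cont_bfR)
  obtain u0 where u0: "u0 \<in> sphere 0 1" and u0m: "\<And>y. y \<in> sphere 0 1 \<Longrightarrow> g u0 \<le> g y"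
    using continuous_attains_inf[OF compact_sphere _ cg] by auto
  have "u0 \<noteq> 0" using u0 by auto
  then have c0: "g u0 > 0" unfolding g_def using gpos[OF sym hyp hp'] by blast
  have hom: "g (a *\<^sub>R u) = a^2 * g u" for a u
    unfolding g_def by (simp add: bfR_scale1 bfR_scale2 power2_eq_square algebra_simps)
  have bnd: "norm u ^2 * g u0 \<le> g u" for u
  proof (cases "u = 0")
    case True then show ?thesis by (simp add: g_def)
  next
    case False
    have "(inverse (norm u)) *\<^sub>R u \<in> sphere 0 1" using False by (simp add: norm_inverse)
    then have "g u0 \<le> g ((inverse (norm u)) *\<^sub>R u)" by (rule u0m)
    also have "\<dots> = (inverse (norm u))^2 * g u" by (rule hom)
    finally have "g u0 \<le> (inverse (norm u))^2 * g u" .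
    then have "norm u ^2 * g u0 \<le> norm u^2 * ((inverse (norm u))^2 * g u)"
      by (simp add: mult_left_mono)
    also have "\<dots> = g u" using False by (simp add: field_simps)
    finally show ?thesis .
  qed
  define K where "K = 2 * (real_of_int m)^2 / g u0 + 1"
  have "{w::int^'n. bf G w w = 0 \<and> bf G w h = m} \<subseteq> {w. \<forall>i. \<bar>w$i\<bar> \<le> ceiling K}"
  proof (intro subsetI CollectI allI, elim CollectE conjE)
    fix w :: "int^'n" and i assume w1: "bf G w w = 0" and w2: "bf G w h = m"
    have "g (realv w) = 2 * (real_of_int m)^2"
      unfolding g_def hr_def by (simp add: bfR_realv w1 w2)
    then have nb: "norm (realv w) ^2 * g u0 \<le> 2 * (real_of_int m)^2" using bnd by metis
    have "norm (realv w) \<le> K"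
    proof (cases "norm (realv w) \<le> 1")
      case True then show ?thesis unfolding K_def using c0 by (smt (verit) divide_nonneg_pos zero_le_power2)
    next
      case False
      then have "norm (realv w) \<le> norm (realv w)^2" by (simp add: power2_eq_square) (smt (verit) mult_le_cancel_left1)
      moreover have "norm (realv w)^2 \<le> 2 * (real_of_int m)^2 / g u0" using nb c0 by (simp add: field_simps)
      ultimately show ?thesis unfolding K_def by linarith
    qed
    moreover have "\<bar>realv w $ i\<bar> \<le> norm (realv w)" by (rule component_le_norm_cart)
    ultimately have "\<bar>real_of_int (w$i)\<bar> \<le> K" by (simp add: realv_def)
    then show "\<bar>w$i\<bar> \<le> ceiling K" by linarith
  qed
  then show ?thesis using int_box_finite finite_subset by blast
qed

lemma reflect_facts:
  assumes sym: "even_lattice G" and rr: "bf G r r = -2" and ww: "bf G w w = 0"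
  defines "c \<equiv> bf G w r"
  shows "bf G (w + c *s r) (w + c *s r) = 0"
    and "\<And>x. bf G (w + c *s r) x = bf G w x + c * bf G r x"
    and "bf G w (w + c *s r) = c * c"
    and "\<And>\<xi>. bfR G \<xi> (realv (w + c *s r)) = bfR G \<xi> (realv w) + c * bfR G \<xi> (realv r)"
proof -
  have rw: "bf G r w = c" unfolding c_def
    using bfR_sym[OF sym, of "realv r" "realv w"] by (simp add: bfR_realv)
  have e1: "real_of_int (bf G (w + c *s r) x) = real_of_int (bf G w x + c * bf G r x)" for x
    by (simp add: bfR_realv[symmetric] realv_add realv_smult bfR_add1 bfR_scale1)
  show e: "\<And>x. bf G (w + c *s r) x = bf G w x + c * bf G r x" using e1 by (metis of_int_eq_iff)
  have e2: "real_of_int (bf G x (w + c *s r)) = real_of_int (bf G x w + c * bf G x r)" for x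
    by (simp add: bfR_realv[symmetric] realv_add realv_smult bfR_add2 bfR_scale2)
  have e2': "bf G x (w + c *s r) = bf G x w + c * bf G x r" for x using e2 by (metis of_int_eq_iff)
  show "bf G (w + c *s r) (w + c *s r) = 0"
    unfolding e e2' using rr ww rw c_def by (simp add: algebra_simps)
  show "bf G w (w + c *s r) = c * c" unfolding e2' using ww c_def by simp
  show "\<And>\<xi>. bfR G \<xi> (realv (w + c *s r)) = bfR G \<xi> (realv w) + c * bfR G \<xi> (realv r)"
    by (simp add: realv_add realv_smult bfR_add2 bfR_scale2)
qed

theorem mainTheorem11:
  fixes G :: "int^'n^'n" and h :: "int^'n" and P :: "(int^'n) set" and m :: nat
  assumes "m \<in> {1,2,3}"
    and "polarized G h"
    and "admissible G h (m - 1)"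
    and "m = 2 \<longrightarrow> bf G h h \<ge> 4"
    and "m = 3 \<longrightarrow> bf G h h = 8"
    and "weyl_positive_roots G h P"
    and "\<not> admissible G h m"
  shows "\<exists>w. isotropic G h (int m) w \<and> realv w \<in> closed_fund_polyhedron G h P"
proof -
  have sym: "even_lattice G" and hyp: "hyperbolic G" and hp: "bf G h h > 0"
    using assms(2) by (auto simp: polarized_def)
  have hpR: "bfR G (realv h) (realv h) > 0" using hp by (simp add: bfR_realv)
  have m1: "m \<ge> 1" using assms(1) by auto
  have noiso: "\<And>q w. 1 \<le> q \<Longrightarrow> q \<le> int m - 1 \<Longrightarrow> \<not> isotropic G h q w"
  proof -
    fix q w assume q: "1 \<le> q" "q \<le> int m - 1"
    have "nat q \<in> {1..m-1}" using q by auto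
    moreover have "int (nat q) = q" using q by simp
    ultimately show "\<not> isotropic G h q w" using assms(3) unfolding admissible_def by metis
  qed
  define M where "M = {w. isotropic G h (int m) w}"
  have finM: "finite M" unfolding M_def isotropic_def using iso_finite[OF sym hyp hp] by blast
  have neM: "M \<noteq> {}"
  proof -
    obtain j w where j: "j \<in> {1..m}" and w: "isotropic G h (int j) w"
      using assms(7) unfolding admissible_def by blast
    have "j = m" using noiso[of "int j" w] j w by force
    then show ?thesis using w M_def by auto
  qed
  obtain \<xi> where xi1: "\<forall>r\<in>roots_h G h. bfR G \<xi> (realv r) \<noteq> 0"
    and Pdef: "P = {r\<in>roots_h G h. bfR G \<xi> (realv r) > 0}"
    using assms(6) unfolding weyl_positive_roots_def by blast
  define f where "f = (\<lambda>w. bfR G \<xi> (realv w))"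
  obtain w where wM: "w \<in> M" and wmin: "\<And>w'. w' \<in> M \<Longrightarrow> f w \<le> f w'"
  proof -
    have "Min (f ` M) \<in> f ` M" using finM neM by simp
    then obtain w where "w \<in> M" "f w = Min (f ` M)" by auto
    moreover have "\<And>w'. w' \<in> M \<Longrightarrow> Min (f ` M) \<le> f w'" using finM by simp
    ultimately show ?thesis using that by metis
  qed
  have ww: "bf G w w = 0" and wh: "bf G w h = int m" using wM M_def isotropic_def by auto
  have hw: "bf G h w = int m"
    using bfR_sym[OF sym, of "realv h" "realv w"] wh by (simp add: bfR_realv)
  have A: "bfR G (realv w) (realv r) \<ge> 0" if r: "r \<in> P" for r
  proof (rule ccontr)
    assume neg: "\<not> ?thesis"
    define c where "c = bf G w r"
    have c0: "c < 0" using neg by (simp add: bfR_realv c_def)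
    have rr: "bf G r r = -2" and rh: "bf G r h = 0" and xr: "f r > 0"
      using r Pdef roots_h_def f_def by auto
    note R = reflect_facts[OF sym rr ww, folded c_def]
    have "w + c *s r \<in> M" unfolding M_def isotropic_def using R(1) R(2)[of h] wh rh by simp
    then have "f w \<le> f (w + c *s r)" by (rule wmin)
    moreover have "f (w + c *s r) = f w + c * f r" unfolding f_def by (rule R(4))
    moreover have "c * f r < 0" using c0 xr by (simp add: mult_neg_pos)
    ultimately show False by linarith
  qed
  have B: "bfR G (realv w) (realv r) \<ge> 0" if rr: "bf G r r = -2" and rh: "bf G r h > 0" for r
  proof (rule ccontr)
    assume neg: "\<not> ?thesis"
    define c where "c = bf G w r"
    have c0: "c < 0" using neg by (simp add: bfR_realv c_def)
    note R = reflect_facts[OF sym rr ww, folded c_def]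
    define w' where "w' = w + c *s r"
    define q where "q = bf G w' h"
    have q: "q = int m + c * bf G r h" unfolding q_def w'_def using R(2)[of h] wh by simp
    have "c * bf G r h \<le> (-1) * bf G r h" using c0 rh by (intro mult_right_mono) auto
    then have "c * bf G r h \<le> -1" using rh by linarith
    then have qle: "q \<le> int m - 1" using q by simp
    have w'w': "bf G w' w' = 0" unfolding w'_def by (rule R(1))
    have ww': "bf G w w' = c * c" unfolding w'_def by (rule R(3))
    have "q \<ge> 1"
    proof (rule ccontr)
      assume "\<not> q \<ge> 1"
      then have qn: "q \<le> 0" by simp
      define y where "y = real_of_int q *\<^sub>R realv w - real m *\<^sub>R realv w'"
      have s1: "bf G w' w = c * c"
        using bfR_sym[OF sym, of "realv w'" "realv w"] ww' by (simp add: bfR_realv) (metis of_int_eq_iff of_int_mult)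
      have yh: "bfR G y (realv h) = 0" unfolding y_def
        by (simp add: bfR_diff1 bfR_scale1 bfR_realv wh q_def)
      have Qy: "bfR G y y = - 2 * real m * q * (c * c)" unfolding y_def
        by (simp add: bfR_diff1 bfR_diff2 bfR_scale1 bfR_scale2 bfR_realv ww w'w' ww' s1 algebra_simps)
      have "bfR G y y \<ge> 0" unfolding Qy using qn
        by (simp add: mult_nonneg_nonpos2 mult_nonpos_nonneg zero_le_mult_iff mult_le_0_iff)
      then have "y = 0" using hperp_neg[OF sym hyp hpR yh] by force
      moreover have "bfR G y (realv w) = - real m * (c * c)" unfolding y_def
        by (simp add: bfR_diff1 bfR_scale1 bfR_realv ww s1)
      moreover have "real m * (c*c) > 0" using m1 c0 by (simp add: mult_pos_pos mult_neg_neg)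
      ultimately show False by auto
    qed
    then have "\<not> isotropic G h q w'" using noiso qle by blast
    then show False using w'w' q_def by (simp add: isotropic_def)
  qed
  show ?thesis
  proof (intro exI conjI)
    show "isotropic G h (int m) w" using wM M_def by simp
    show "realv w \<in> closed_fund_polyhedron G h P"
      unfolding closed_fund_polyhedron_def using A B by (simp add: bfR_realv ww wh)
  qed
qed

end
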